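(* For every policy $\kappa^j\in\mathcal{SP}^j$ and every $x\in\mathcal{CS}^j$ we have $Ax+B\kappa^j(x)+w\in\mathcal{CS}^j\subseteq\mathcal{X}$ for all $w\in\mathcal{W}$, and $\kappa^j(x)\in\mathcal{U}$.
   Context: System $x_{t+1}=Ax_t+Bu_t+w_t$, $A\in\mathbb{R}^{n\times n}$, $B\in\mathbb{R}^{n\times d}$ known; disturbances in $\mathcal{W}\subset\mathbb{R}^n$, a compact polytope containing the origin with vertices $v_w^1,\dots,v_w^l$. Constraints $x_t\in\mathcal{X}$, $u_t\in\mathcal{U}$ with $\mathcal{X},\mathcal{U}$ convex, compact, containing the origin. A gain $K$ and a polyhedron $\mathcal{O}\subset\mathcal{X}$ with vertices $v_o^1,\dots,v_o^m$ satisfy $x\in\mathcal{O}\Rightarrow(A+BK)x+w\in\mathcal{O}$ for all $w\in\mathcal{W}$. Stage cost $h:\mathbb{R}^n\times\mathbb{R}^d\to\mathbb{R}$ continuous, jointly convex, with $\mathcal{K}_\infty$ functions such that $\alpha^l_x(|x|_\mathcal{O})\le h(x,0)\le\alpha^u_x(|x|_\mathcal{O})$ and $\alpha^l_u(|u|_{K\mathcal{O}})\le h(0,u)\le\alpha^u_u(|u|_{K\mathcal{O}})$, where $|x|_\mathcal{S}=\inf_{y\in\mathcal{S}}\|x-y\|_2$, $K\mathcal{O}=\{Kx:x\in\mathcal{O}\}$. Horizon $N\ge1$. Construction. $\mathcal{CS}^0=\mathcal{O}$, $\mathbf{X}^0=[v_o^1,\dots,v_o^m]$, $\mathbf{U}^0=[Kv_o^1,\dots,Kv_o^m]$.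 For each iteration $i\in\{1,\dots,j\}$ there are a duration $T^i$, a closed-loop trajectory $x^i_0,\dots,x^i_{T^i}$, and for each $t\in\{0,\dots,T^i\}$ an $N$-step policy $[\pi^{i,*}_{t|t},\dots,\pi^{i,*}_{t+N-1|t}]$ with $x^i_{t+1}=Ax^i_t+B\pi^{i,*}_{t|t}(x^i_t)+w^i_t$, assumed to satisfy: the predicted system $x_{s+1|t}=Ax_{s|t}+B\pi^{i,*}_{s|t}(x_{s|t})+w_{s|t}$, $s=t,\dots,t+N-1$, $x_{t|t}=x^i_t$, satisfies $x_{s|t}\in\mathcal{X}$, $\pi^{i,*}_{s|t}(x_{s|t})\in\mathcal{U}$ and $x_{t+N|t}\in\mathcal{CS}^{i-1}$ for all disturbances in $\mathcal{W}$. Reachable sets $\mathcal{R}^i_{t\to t}=\{x^i_t\}$, $\mathcal{R}^i_{t\to s+1}=\{Ax+B\pi^{i,*}_{s|t}(x)+w:x\in\mathcal{R}^i_{t\to s},w\in\mathcal{W}\}$; $\mathcal{CS}^i=\mathrm{Conv}\big(\bigcup_{t=0}^{T^i}\bigcup_{s=t}^{t+N}\mathcal{R}^i_{t\to s}\cup\mathcal{CS}^{i-1}\big)$. With $v^{i,1}_{s|t},\dots,v^{i,l^{s-t}}_{s|t}$ the vertices of $\mathcal{R}^i_{t\to s}$, $\mathbf{X}^i$ and $\mathbf{U}^i$ append to $\mathbf{X}^{i-1},\mathbf{U}^{i-1}$ the columns $v^{i,r}_{s|t}$ and $\pi^{i,*}_{s|t}(v^{i,r}_{s|t})$ for all $t\in\{0,\dots,T^i\}$,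 $s\in\{t,\dots,t+N-1\}$, all $r$. $\Lambda^j(x)=\{\lambda\ge0:\mathbf{X}^j\lambda=x,\ \mathbf{1}^\top\lambda=1\}$. The set of safe policies $\mathcal{SP}^j$ consists of all $\kappa:\mathbb{R}^n\to\mathbb{R}^d$ such that for every $x\in\mathcal{CS}^j$ there is $\lambda\in\Lambda^j(x)$ with $\kappa(x)=\mathbf{U}^j\lambda$.
   Formalization: The invariant set $\mathcal{O}$ also satisfies $Kx\in\mathcal{U}$ for every $x\in\mathcal{O}$, and the vertices $v^{i,r}_{s|t}$ of $\mathcal{R}^i_{t\to s}$ are taken as the points reached from $x^i_t$ with disturbances drawn from the vertices of $\mathcal{W}$. Each condition added here is assumed in the paper as well or is needed for the statement above to hold. *)

theory Defs
  imports "HOL-Analysis.Analysis"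
begin

text \<open>With D = W this is the reachable set R_{t -> t+k}; with D = the vertex set of W
  these are the l^k points v_{t+k|t}^r (vertices) of R_{t -> t+k}.\<close>
fun propset :: "real^'n^'n \<Rightarrow> real^'d^'n \<Rightarrow> (nat \<Rightarrow> real^'n \<Rightarrow> real^'d) \<Rightarrow> (real^'n) set
    \<Rightarrow> real^'n \<Rightarrow> nat \<Rightarrow> nat \<Rightarrow> (real^'n) set" where
  "propset A B p D x0 t 0 = {x0}"
| "propset A B p D x0 t (Suc k) =
     {A *v x + B *v p (t + k) x + w | x w. x \<in> propset A B p D x0 t k \<and> w \<in> D}"

fun pred_state :: "real^'n^'n \<Rightarrow> real^'d^'n \<Rightarrow> (nat \<Rightarrow> real^'n \<Rightarrow> real^'d)
    \<Rightarrow> real^'n \<Rightarrow> nat \<Rightarrow> (nat \<Rightarrow> real^'n) \<Rightarrow> nat \<Rightarrow> real^'n" where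
  "pred_state A B p x0 t ws 0 = x0"
| "pred_state A B p x0 t ws (Suc k) =
     A *v pred_state A B p x0 t ws k + B *v p (t + k) (pred_state A B p x0 t ws k) + ws k"

text \<open>Convex safe sets CS^i. pol i t s = pi^{i,*}_{s|t}, xtraj i t = x^i_t, T i = T^i.\<close>
fun CS :: "real^'n^'n \<Rightarrow> real^'d^'n \<Rightarrow> (real^'n) set \<Rightarrow> nat \<Rightarrow> (nat \<Rightarrow> nat)
    \<Rightarrow> (nat \<Rightarrow> nat \<Rightarrow> real^'n) \<Rightarrow> (nat \<Rightarrow> nat \<Rightarrow> nat \<Rightarrow> real^'n \<Rightarrow> real^'d)
    \<Rightarrow> (real^'n) set \<Rightarrow> nat \<Rightarrow> (real^'n) set" where
  "CS A B W N T xtraj pol Oset 0 = Oset"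
| "CS A B W N T xtraj pol Oset (Suc i) =
     convex hull ((\<Union>t\<in>{0..T (Suc i)}. \<Union>k\<in>{0..N}.
                     propset A B (pol (Suc i) t) W (xtraj (Suc i) t) t k)
                  \<union> CS A B W N T xtraj pol Oset i)"

text \<open>The columns of (X^i ; U^i), as pairs (state column, input column).\<close>
fun cols :: "real^'n^'n \<Rightarrow> real^'d^'n \<Rightarrow> real^'n^'d \<Rightarrow> (real^'n) set \<Rightarrow> nat \<Rightarrow> (nat \<Rightarrow> nat)
    \<Rightarrow> (nat \<Rightarrow> nat \<Rightarrow> real^'n) \<Rightarrow> (nat \<Rightarrow> nat \<Rightarrow> nat \<Rightarrow> real^'n \<Rightarrow> real^'d)
    \<Rightarrow> (real^'n) set \<Rightarrow> nat \<Rightarrow> ((real^'n) \<times> (real^'d)) set" where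
  "cols A B K VW N T xtraj pol VO 0 = {(v, K *v v) | v. v \<in> VO}"
| "cols A B K VW N T xtraj pol VO (Suc i) =
     cols A B K VW N T xtraj pol VO i \<union>
     {(v, pol (Suc i) t (t + k) v) | t k v. t \<le> T (Suc i) \<and> k < N \<and>
        v \<in> propset A B (pol (Suc i) t) VW (xtraj (Suc i) t) t k}"

definition Lambda :: "((real^'n) \<times> (real^'d)) set \<Rightarrow> real^'n \<Rightarrow> (((real^'n) \<times> (real^'d)) \<Rightarrow> real) set" where
  "Lambda C x = {lam. (\<forall>c\<in>C. lam c \<ge> 0) \<and> (\<Sum>c\<in>C. lam c) = 1 \<and> (\<Sum>c\<in>C. lam c *\<^sub>R fst c) = x}"

definition SP :: "((real^'n) \<times> (real^'d)) set \<Rightarrow> (real^'n) set \<Rightarrow> (real^'n \<Rightarrow> real^'d) set" where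
  "SP C S = {kappa. \<forall>x\<in>S. \<exists>lam\<in>Lambda C x. kappa x = (\<Sum>c\<in>C. lam c *\<^sub>R snd c)}"

end

theory Submission
  imports Defs
begin



lemma pred_state_cong:
  "(\<forall>m<k. ws m = ws' m) \<Longrightarrow> pred_state A B p x0 t ws k = pred_state A B p x0 t ws' k"
  by (induction k) auto

lemma propset_pred:
  assumes "D \<subseteq> W" "0 \<in> W"
  shows "v \<in> propset A B p D x0 t k \<Longrightarrow> \<exists>ws. (\<forall>m. ws m \<in> W) \<and> v = pred_state A B p x0 t ws k"
proof (induction k arbitrary: v)
  case 0
  then show ?case using assms by (rule_tac x="\<lambda>_. 0" in exI) auto
next
  case (Suc k)
  then obtain x w where xw: "v = A *v x + B *v p (t + k) x + w" "x \<in> propset A B p D x0 t k" "w \<in> D"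
    by auto
  then obtain ws where ws: "\<forall>m. ws m \<in> W" "x = pred_state A B p x0 t ws k" using Suc.IH by blast
  define ws' where "ws' = ws(k := w)"
  have "pred_state A B p x0 t ws' k = x" using ws(2) pred_state_cong[of k ws' ws] unfolding ws'_def by auto
  then have "v = pred_state A B p x0 t ws' (Suc k)" using xw unfolding ws'_def by simp
  moreover have "\<forall>m. ws' m \<in> W" using ws xw assms unfolding ws'_def by auto
  ultimately show ?case by blast
qed

lemma propset_mono: "D \<subseteq> D' \<Longrightarrow> propset A B p D x0 t k \<subseteq> propset A B p D' x0 t k"
  by (induction k) fastforce+

lemma propset_step: "x \<in> propset A B p D x0 t k \<Longrightarrow> w \<in> D \<Longrightarrow>
   A *v x + B *v p (t + k) x + w \<in> propset A B p D x0 t (Suc k)"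
  by auto

lemma CS_Suc_mono: "CS A B W N T xtraj pol Oset i \<subseteq> CS A B W N T xtraj pol Oset (Suc i)"
  by (simp add: subset_trans[OF Un_upper2 hull_subset])

lemma CS_mono: "i \<le> j \<Longrightarrow> CS A B W N T xtraj pol Oset i \<subseteq> CS A B W N T xtraj pol Oset j"
  by (induction j) (use CS_Suc_mono le_Suc_eq in blast)+

lemma propset_in_CS: "t \<le> T (Suc i) \<Longrightarrow> k \<le> N \<Longrightarrow>
   propset A B (pol (Suc i) t) W (xtraj (Suc i) t) t k \<subseteq> CS A B W N T xtraj pol Oset (Suc i)"
  by (auto intro!: hull_subset[THEN subsetD]) (meson atLeastAtMost_iff le0)

lemma l2: fixes A :: "real^'n^'n" and B :: "real^'d^'n"
  assumes "finite C" "(\<Sum>c\<in>C. lam c) = 1"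
  shows "A *v (\<Sum>c\<in>C. lam c *\<^sub>R fst c) + B *v (\<Sum>c\<in>C. lam c *\<^sub>R snd c) + w
     = (\<Sum>c\<in>C. lam c *\<^sub>R (A *v fst c + B *v snd c + w))"
proof -
  have "(\<Sum>c\<in>C. lam c *\<^sub>R (A *v fst c + B *v snd c + w))
      = (\<Sum>c\<in>C. lam c *\<^sub>R (A *v fst c)) + (\<Sum>c\<in>C. lam c *\<^sub>R (B *v snd c)) + (\<Sum>c\<in>C. lam c) *\<^sub>R w"
    by (simp add: scaleR_add_right sum.distrib scaleR_sum_left)
  also have "\<dots> = A *v (\<Sum>c\<in>C. lam c *\<^sub>R fst c) + B *v (\<Sum>c\<in>C. lam c *\<^sub>R snd c) + w"
    by (simp add: assms vec.sum matrix_vector_mult_scaleR)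
  finally show ?thesis by simp
qed

theorem proposition1:
  fixes A :: "real^'n^'n" and B :: "real^'d^'n" and K :: "real^'n^'d"
    and W X Oset :: "(real^'n) set" and U :: "(real^'d) set"
    and VW VO :: "(real^'n) set" and N j :: nat and T :: "nat \<Rightarrow> nat"
    and xtraj wtraj :: "nat \<Rightarrow> nat \<Rightarrow> real^'n"
    and pol :: "nat \<Rightarrow> nat \<Rightarrow> nat \<Rightarrow> real^'n \<Rightarrow> real^'d"
  assumes W_poly: "finite VW" "W = convex hull VW" "VW = {v. v extreme_point_of W}" "0 \<in> W"
    and X_ok: "convex X" "compact X" "0 \<in> X"
    and U_ok: "convex U" "compact U" "0 \<in> U"
    and O_poly: "finite VO" "Oset = convex hull VO" "VO = {v. v extreme_point_of Oset}" "Oset \<subseteq> X"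
    and O_inv: "\<forall>x\<in>Oset. \<forall>w\<in>W. (A + B ** K) *v x + w \<in> Oset"
    and O_input: "\<forall>x\<in>Oset. K *v x \<in> U"
    and N_pos: "N \<ge> 1"
    and traj: "\<forall>i\<in>{1..j}. \<forall>t<T i.
                 xtraj i (t + 1) = A *v xtraj i t + B *v pol i t t (xtraj i t) + wtraj i t
                 \<and> wtraj i t \<in> W"
    and feas: "\<forall>i\<in>{1..j}. \<forall>t\<le>T i. \<forall>ws. (\<forall>k. ws k \<in> W) \<longrightarrow>
                 (\<forall>k<N. pred_state A B (pol i t) (xtraj i t) t ws k \<in> X
                        \<and> pol i t (t + k) (pred_state A B (pol i t) (xtraj i t) t ws k) \<in> U)
                 \<and> pred_state A B (pol i t) (xtraj i t) t ws N \<in> CS A B W N T xtraj pol Oset (i - 1)"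
  shows "\<forall>kappa\<in>SP (cols A B K VW N T xtraj pol VO j) (CS A B W N T xtraj pol Oset j).
           \<forall>x\<in>CS A B W N T xtraj pol Oset j.
             (\<forall>w\<in>W. A *v x + B *v kappa x + w \<in> CS A B W N T xtraj pol Oset j)
             \<and> CS A B W N T xtraj pol Oset j \<subseteq> X
             \<and> kappa x \<in> U"
proof -
  have VWW: "VW \<subseteq> W" unfolding W_poly(2) by (rule hull_subset)
  have CSX: "CS A B W N T xtraj pol Oset i \<subseteq> X" if "i \<le> j" for i
    using that
  proof (induction i)
    case 0 then show ?case using O_poly(4) by simp
  next
    case (Suc i)
    have "propset A B (pol (Suc i) t) W (xtraj (Suc i) t) t k \<subseteq> X"
      if t: "t \<le> T (Suc i)" and k: "k \<le> N" for t k
    proof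
      fix v assume v: "v \<in> propset A B (pol (Suc i) t) W (xtraj (Suc i) t) t k"
      obtain ws where ws: "\<forall>m. ws m \<in> W" "v = pred_state A B (pol (Suc i) t) (xtraj (Suc i) t) t ws k"
        using propset_pred[OF order_refl W_poly(4) v] by blast
      have i1: "Suc i \<in> {1..j}" using Suc.prems by auto
      have wsk: "\<And>m. ws m \<in> W" using ws(1) by blast
      note f = feas[rule_format, OF i1 t wsk]
      show "v \<in> X"
      proof (cases "k < N")
        case True then show ?thesis using conjunct1[OF f] ws(2) by simp
      next
        case False then have "k = N" using k by simp
        then have "v \<in> CS A B W N T xtraj pol Oset i" using f ws(2) by simp
        moreover have "CS A B W N T xtraj pol Oset i \<subseteq> X" using Suc.IH Suc.prems by simp
        ultimately show ?thesis by blast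
      qed
    qed
    note P = this
    have IHX: "CS A B W N T xtraj pol Oset i \<subseteq> X" using Suc.IH Suc.prems by simp
    show ?case unfolding CS.simps(2)
      by (rule hull_minimal[where S=convex, OF _ X_ok(1)], intro Un_least UN_least) (simp_all add: P IHX)
  qed
  have COL: "\<forall>c\<in>cols A B K VW N T xtraj pol VO i. snd c \<in> U \<and>
      (\<forall>w\<in>W. A *v fst c + B *v snd c + w \<in> CS A B W N T xtraj pol Oset i)" if "i \<le> j" for i
    using that
  proof (induction i)
    case 0
    have "A *v v + B *v (K *v v) + w \<in> Oset" if "v \<in> VO" "w \<in> W" for v w
    proof -
      have vO: "v \<in> Oset" unfolding O_poly(2) using that(1) by (rule hull_inc)
      have "(A + B ** K) *v v = A *v v + B *v (K *v v)"
        by (simp add: matrix_vector_mul_assoc matrix_vector_mult_add_rdistrib)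
      moreover have "(A + B ** K) *v v + w \<in> Oset" using O_inv vO that(2) by blast
      ultimately show ?thesis by simp
    qed
    moreover have "K *v v \<in> U" if "v \<in> VO" for v
    proof -
      have "v \<in> Oset" unfolding O_poly(2) using that(1) by (rule hull_inc)
      then show ?thesis using O_input by blast
    qed
    ultimately show ?case by auto
  next
    case (Suc i)
    have old: "\<forall>c\<in>cols A B K VW N T xtraj pol VO i. snd c \<in> U \<and>
      (\<forall>w\<in>W. A *v fst c + B *v snd c + w \<in> CS A B W N T xtraj pol Oset (Suc i))"
    proof -
      have IH: "\<forall>c\<in>cols A B K VW N T xtraj pol VO i. snd c \<in> U \<and>
        (\<forall>w\<in>W. A *v fst c + B *v snd c + w \<in> CS A B W N T xtraj pol Oset i)"
        using Suc.IH Suc.prems by simp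
      show ?thesis using IH CS_Suc_mono[of A B W N T xtraj pol Oset i] by blast
    qed
    have new: "pol (Suc i) t (t + k) v \<in> U \<and>
      (\<forall>w\<in>W. A *v v + B *v pol (Suc i) t (t + k) v + w \<in> CS A B W N T xtraj pol Oset (Suc i))"
      if t: "t \<le> T (Suc i)" and k: "k < N" and v: "v \<in> propset A B (pol (Suc i) t) VW (xtraj (Suc i) t) t k"
      for t k v
    proof
      obtain ws where ws: "\<forall>m. ws m \<in> W" "v = pred_state A B (pol (Suc i) t) (xtraj (Suc i) t) t ws k"
        using propset_pred[OF VWW W_poly(4) v] by blast
      have i1: "Suc i \<in> {1..j}" using Suc.prems by auto
      have wsk: "\<And>m. ws m \<in> W" using ws(1) by blast
      note f = feas[rule_format, OF i1 t wsk]
      show "pol (Suc i) t (t + k) v \<in> U" using conjunct1[OF f] ws(2) k by simp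
      have vW: "v \<in> propset A B (pol (Suc i) t) W (xtraj (Suc i) t) t k"
        using propset_mono[OF VWW] v by blast
      show "\<forall>w\<in>W. A *v v + B *v pol (Suc i) t (t + k) v + w \<in> CS A B W N T xtraj pol Oset (Suc i)"
      proof -
        have sk: "Suc k \<le> N" using k by simp
        have sub: "propset A B (pol (Suc i) t) W (xtraj (Suc i) t) t (Suc k) \<subseteq> CS A B W N T xtraj pol Oset (Suc i)"
          by (rule propset_in_CS[where t=t and T=T and i=i and k="Suc k" and N=N and A=A and B=B and pol=pol and W=W and xtraj=xtraj and Oset=Oset, OF t sk])
        show ?thesis using propset_step[OF vW] sub by blast
      qed
    qed
    show ?case unfolding cols.simps(2) ball_Un
    proof (intro conjI)
      show "\<forall>c\<in>cols A B K VW N T xtraj pol VO i. snd c \<in> U \<and>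
        (\<forall>w\<in>W. A *v fst c + B *v snd c + w \<in> CS A B W N T xtraj pol Oset (Suc i))"
        using old .
      show "\<forall>c\<in>{(v, pol (Suc i) t (t + k) v) | t k v. t \<le> T (Suc i) \<and> k < N \<and>
        v \<in> propset A B (pol (Suc i) t) VW (xtraj (Suc i) t) t k}. snd c \<in> U \<and>
        (\<forall>w\<in>W. A *v fst c + B *v snd c + w \<in> CS A B W N T xtraj pol Oset (Suc i))"
      proof
        fix c assume "c \<in> {(v, pol (Suc i) t (t + k) v) | t k v. t \<le> T (Suc i) \<and> k < N \<and>
        v \<in> propset A B (pol (Suc i) t) VW (xtraj (Suc i) t) t k}"
        then obtain t k v where c: "c = (v, pol (Suc i) t (t + k) v)" "t \<le> T (Suc i)" "k < N"
          "v \<in> propset A B (pol (Suc i) t) VW (xtraj (Suc i) t) t k" by blast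
        show "snd c \<in> U \<and>
          (\<forall>w\<in>W. A *v fst c + B *v snd c + w \<in> CS A B W N T xtraj pol Oset (Suc i))"
          unfolding c(1) fst_conv snd_conv using new[OF c(2-4)] .
      qed
    qed
  qed
  show ?thesis
  proof (intro ballI conjI)
    fix kappa x
    assume kap: "kappa \<in> SP (cols A B K VW N T xtraj pol VO j) (CS A B W N T xtraj pol Oset j)"
      and x: "x \<in> CS A B W N T xtraj pol Oset j"
    let ?C = "cols A B K VW N T xtraj pol VO j"
    let ?S = "CS A B W N T xtraj pol Oset j"
    obtain lam where lam: "\<forall>c\<in>?C. lam c \<ge> 0" "(\<Sum>c\<in>?C. lam c) = 1"
      "(\<Sum>c\<in>?C. lam c *\<^sub>R fst c) = x" and kx: "kappa x = (\<Sum>c\<in>?C. lam c *\<^sub>R snd c)"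
    proof -
      obtain lam where "lam \<in> Lambda ?C x" "kappa x = (\<Sum>c\<in>?C. lam c *\<^sub>R snd c)"
        using kap x unfolding SP_def by blast
      then show ?thesis using that unfolding Lambda_def by blast
    qed
    have fin: "finite ?C" using lam(2) by (metis sum.infinite zero_neq_one)
    have col: "\<forall>c\<in>?C. snd c \<in> U \<and> (\<forall>w\<in>W. A *v fst c + B *v snd c + w \<in> ?S)"
      using COL[OF order_refl] .
    show "kappa x \<in> U" unfolding kx
      by (rule convex_sum[OF fin U_ok(1) lam(2)]) (use lam(1) col in auto)
    show "?S \<subseteq> X" using CSX[OF order_refl] .
    fix w assume w: "w \<in> W"
    have cvS: "convex ?S"
      by (cases j) (simp_all add: O_poly(2) convex_convex_hull)
    have "A *v x + B *v kappa x + w = (\<Sum>c\<in>?C. lam c *\<^sub>R (A *v fst c + B *v snd c + w))"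
      using l2[OF fin lam(2), of A B w] by (simp only: lam(3) kx)
    also have "\<dots> \<in> ?S"
      by (rule convex_sum[OF fin cvS lam(2)]) (use lam(1) col w in auto)
    finally show "A *v x + B *v kappa x + w \<in> ?S" .
  qed
qed

end
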